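(* Let $X$ be a finite connected poset and $F$ a field with $\mathrm{char}(F)\notin\{2,3\}$. Let $\varphi:I(X,F)\to I(X,F)$ be a bijective $F$-linear map with $\varphi(fgf)=\varphi(f)\varphi(g)\varphi(f)$ for all $f,g$. Then $\varphi=r\psi$, where $r\in\{-1,1\}$ and $\psi$ is either an automorphism or an anti-automorphism of $I(X,F)$.
   Context: $I(X,F)$ is the incidence algebra of the locally finite poset $X$ over $F$ (functions $f:X\times X\to F$ vanishing unless $x\le y$, with product $(fg)(x,y)=\sum_{x\le z\le y}f(x,z)g(z,y)$). A poset is connected if any two elements are joined by a finite sequence of elements in which consecutive elements are comparable. *)

theory Defs
  imports Main
begin

text \<open>The finite poset X is modelled as a finite type 'a with a partial order
(class order); every finite poset is isomorphic to such a type.\<close>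

definition poset_connected :: "('a::order) itself \<Rightarrow> bool" where
  "poset_connected _ \<longleftrightarrow>
     (\<forall>x y::'a. (\<lambda>a b. a \<le> b \<or> b \<le> a)\<^sup>*\<^sup>* x y)"

definition inc_alg :: "('a::order \<Rightarrow> 'a \<Rightarrow> 'b::field) set" where
  "inc_alg = {f. \<forall>x y. \<not> x \<le> y \<longrightarrow> f x y = 0}"

definition inc_mult :: "('a::order \<Rightarrow> 'a \<Rightarrow> 'b::field) \<Rightarrow> ('a \<Rightarrow> 'a \<Rightarrow> 'b) \<Rightarrow> 'a \<Rightarrow> 'a \<Rightarrow> 'b" where
  "inc_mult f g = (\<lambda>x y. \<Sum>z\<in>{z. x \<le> z \<and> z \<le> y}. f x z * g z y)"

definition inc_add :: "('a \<Rightarrow> 'a \<Rightarrow> 'b::field) \<Rightarrow> ('a \<Rightarrow> 'a \<Rightarrow> 'b) \<Rightarrow> 'a \<Rightarrow> 'a \<Rightarrow> 'b" where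
  "inc_add f g = (\<lambda>x y. f x y + g x y)"

definition inc_scale :: "'b::field \<Rightarrow> ('a \<Rightarrow> 'a \<Rightarrow> 'b) \<Rightarrow> 'a \<Rightarrow> 'a \<Rightarrow> 'b" where
  "inc_scale c f = (\<lambda>x y. c * f x y)"

definition inc_linear :: "(('a::order \<Rightarrow> 'a \<Rightarrow> 'b::field) \<Rightarrow> ('a \<Rightarrow> 'a \<Rightarrow> 'b)) \<Rightarrow> bool" where
  "inc_linear \<phi> \<longleftrightarrow>
     (\<forall>f\<in>inc_alg. \<forall>g\<in>inc_alg. \<phi> (inc_add f g) = inc_add (\<phi> f) (\<phi> g)) \<and>
     (\<forall>c. \<forall>f\<in>inc_alg. \<phi> (inc_scale c f) = inc_scale c (\<phi> f))"

definition inc_automorphism :: "(('a::order \<Rightarrow> 'a \<Rightarrow> 'b::field) \<Rightarrow> ('a \<Rightarrow> 'a \<Rightarrow> 'b)) \<Rightarrow> bool" where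
  "inc_automorphism \<psi> \<longleftrightarrow> bij_betw \<psi> inc_alg inc_alg \<and> inc_linear \<psi> \<and>
     (\<forall>f\<in>inc_alg. \<forall>g\<in>inc_alg. \<psi> (inc_mult f g) = inc_mult (\<psi> f) (\<psi> g))"

definition inc_anti_automorphism :: "(('a::order \<Rightarrow> 'a \<Rightarrow> 'b::field) \<Rightarrow> ('a \<Rightarrow> 'a \<Rightarrow> 'b)) \<Rightarrow> bool" where
  "inc_anti_automorphism \<psi> \<longleftrightarrow> bij_betw \<psi> inc_alg inc_alg \<and> inc_linear \<psi> \<and>
     (\<forall>f\<in>inc_alg. \<forall>g\<in>inc_alg. \<psi> (inc_mult f g) = inc_mult (\<psi> g) (\<psi> f))"

end

theory Submission
  imports Defs "HOL-Library.Function_Algebras"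
begin

definition mm :: "('a::finite \<Rightarrow> 'a \<Rightarrow> 'b::field) \<Rightarrow> ('a \<Rightarrow> 'a \<Rightarrow> 'b) \<Rightarrow> 'a \<Rightarrow> 'a \<Rightarrow> 'b"
  (infixl "\<odot>" 70) where
  "f \<odot> g = (\<lambda>x y. \<Sum>z\<in>UNIV. f x z * g z y)"

definition dlt :: "'a \<Rightarrow> 'a \<Rightarrow> 'b::field" where
  "dlt = (\<lambda>x y. if x = y then 1 else 0)"

definition eu :: "'a \<Rightarrow> 'a \<Rightarrow> 'a \<Rightarrow> 'a \<Rightarrow> 'b::field" where
  "eu x y = (\<lambda>a b. if a = x \<and> b = y then 1 else 0)"

lemma sum_fun_app: "(sum F I) a = sum (\<lambda>i. F i a) I"
  by (induct I rule: infinite_finite_induct) auto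

lemma mm_assoc: "(f \<odot> g) \<odot> h = f \<odot> (g \<odot> h)"
  unfolding mm_def
  apply (rule ext)+
  apply (simp add: sum_distrib_left sum_distrib_right mult.assoc)
  apply (subst sum.swap) ..

lemma mm_add_left: "(f + g) \<odot> h = f \<odot> h + g \<odot> h"
  unfolding mm_def by (rule ext)+ (simp add: distrib_right sum.distrib)

lemma mm_add_right: "h \<odot> (f + g) = h \<odot> f + h \<odot> g"
  unfolding mm_def by (rule ext)+ (simp add: distrib_left sum.distrib)

lemma mm_neg_left: "(- f) \<odot> h = - (f \<odot> h)"
  unfolding mm_def by (rule ext)+ (simp add: sum_negf)

lemma mm_neg_right: "h \<odot> (- f) = - (h \<odot> f)"
  unfolding mm_def by (rule ext)+ (simp add: sum_negf)

lemma mm_zero_left[simp]: "0 \<odot> h = 0"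
  unfolding mm_def by (rule ext)+ simp

lemma mm_zero_right[simp]: "h \<odot> 0 = 0"
  unfolding mm_def by (rule ext)+ simp

lemma mm_scale_left: "inc_scale c f \<odot> h = inc_scale c (f \<odot> h)"
  unfolding mm_def inc_scale_def by (rule ext)+ (simp add: sum_distrib_left mult.assoc)

lemma mm_scale_right: "h \<odot> inc_scale c f = inc_scale c (h \<odot> f)"
  unfolding mm_def inc_scale_def by (rule ext)+ (simp add: sum_distrib_left mult.left_commute)

lemma mm_sum_left: "(sum F I) \<odot> h = (\<Sum>i\<in>I. F i \<odot> h)"
  unfolding mm_def by (rule ext)+ (simp add: sum_fun_app sum_distrib_right, rule sum.swap)

lemma mm_sum_right: "h \<odot> (sum F I) = (\<Sum>i\<in>I. h \<odot> F i)"
  unfolding mm_def by (rule ext)+ (simp add: sum_fun_app sum_distrib_left, rule sum.swap)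

lemma if1_mult[simp]: "(if P then (1::'b::field) else 0) * t = (if P then t else 0)"
  "t * (if P then (1::'b::field) else 0) = (if P then t else 0)" by auto

lemma dlt_left[simp]: "dlt \<odot> f = f"
  unfolding mm_def dlt_def by (rule ext)+ simp

lemma dlt_right[simp]: "f \<odot> dlt = f"
  unfolding mm_def dlt_def by (rule ext)+ simp

lemma eu_left: "eu x y \<odot> g = (\<lambda>a b. if a = x then g y b else 0)"
  unfolding mm_def eu_def by (rule ext)+ simp

lemma eu_right: "g \<odot> eu x y = (\<lambda>a b. if b = y then g a x else 0)"
  unfolding mm_def eu_def by (rule ext)+ simp

lemma eu_eu: "eu x y \<odot> eu z w = (if y = z then eu x w else 0)"
  unfolding eu_left by (rule ext)+ (auto simp: eu_def)

lemma eu_nz: "eu x y \<noteq> (0::'a \<Rightarrow> 'a \<Rightarrow> 'b::field)"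
proof
  assume "eu x y = (0::'a \<Rightarrow> 'a \<Rightarrow> 'b::field)"
  hence "eu x y x y = (0::'b)" by simp
  thus False by (simp add: eu_def)
qed

lemma scale_add: "inc_scale c (f + g) = inc_scale c f + inc_scale c g"
  unfolding inc_scale_def by (rule ext)+ (simp add: distrib_left)

lemma scale_scale: "inc_scale c (inc_scale d f) = inc_scale (c*d) f"
  unfolding inc_scale_def by (rule ext)+ (simp add: mult.assoc)

lemma scale_one[simp]: "inc_scale 1 f = f"
  unfolding inc_scale_def by simp

lemma scale_zero[simp]: "inc_scale 0 f = 0" "inc_scale c 0 = 0"
  unfolding inc_scale_def by (auto intro!: ext)

lemma scale_eq0: "inc_scale c f = 0 \<Longrightarrow> c = 0 \<or> f = 0"
  unfolding inc_scale_def by (auto simp: fun_eq_iff)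

lemma inc_add_eq: "inc_add f g = f + g"
  unfolding inc_add_def by (rule ext)+ simp

lemma mult_eq: "f \<in> inc_alg \<Longrightarrow> g \<in> inc_alg \<Longrightarrow> inc_mult f g = f \<odot> g"
  unfolding inc_mult_def mm_def inc_alg_def
  apply (rule ext)+
  apply (rule sum.mono_neutral_left)
  apply auto
  done

lemma R_mm: "f \<in> inc_alg \<Longrightarrow> g \<in> inc_alg \<Longrightarrow> f \<odot> g \<in> (inc_alg::('a::{finite,order} \<Rightarrow> 'a \<Rightarrow> 'b::field) set)"
  unfolding inc_alg_def mm_def
  apply clarsimp
  apply (rule sum.neutral)
  by (metis mult_not_zero order.trans)

lemma R_add: "f \<in> inc_alg \<Longrightarrow> g \<in> inc_alg \<Longrightarrow> f + g \<in> inc_alg"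
  unfolding inc_alg_def by simp

lemma R_neg: "f \<in> inc_alg \<Longrightarrow> - f \<in> inc_alg"
  unfolding inc_alg_def by simp

lemma R_diff: "f \<in> inc_alg \<Longrightarrow> g \<in> inc_alg \<Longrightarrow> f - g \<in> inc_alg"
  unfolding inc_alg_def by simp

lemma R_scale: "f \<in> inc_alg \<Longrightarrow> inc_scale c f \<in> inc_alg"
  unfolding inc_alg_def inc_scale_def by simp

lemma R_zero: "0 \<in> inc_alg"
  unfolding inc_alg_def by simp

lemma R_dlt: "dlt \<in> inc_alg"
  unfolding inc_alg_def dlt_def by simp

lemma R_eu: "x \<le> y \<Longrightarrow> eu x y \<in> inc_alg"
  unfolding inc_alg_def eu_def by auto


lemma if0_mult[simp]: "(if P then (a::'b::field) else 0) * t = (if P then a * t else 0)"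
  "t * (if P then (a::'b::field) else 0) = (if P then t * a else 0)" by auto

lemma scale_m1: "inc_scale (-1) f = - f"
  unfolding inc_scale_def by (rule ext)+ simp

lemma idem_diag0:
  fixes E :: "'a::{finite,order} \<Rightarrow> 'a \<Rightarrow> 'b::field"
  assumes ER: "E \<in> inc_alg" and idem: "E \<odot> E = E" and d: "\<forall>z. E z z = 0"
  shows "E u v = 0"
proof (induction "card {t. u \<le> t \<and> t \<le> v}" arbitrary: u v rule: less_induct)
  case less
  have "E u v = (E \<odot> E) u v" using idem by simp
  also have "\<dots> = (\<Sum>t\<in>UNIV. E u t * E t v)" by (simp add: mm_def)
  also have "\<dots> = 0"
  proof (rule sum.neutral, intro ballI)
    fix t
    show "E u t * E t v = 0"
    proof (cases "u \<le> t \<and> t \<le> v \<and> t \<noteq> u \<and> t \<noteq> v")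
      case True
      have "{s. u \<le> s \<and> s \<le> t} \<subseteq> {s. u \<le> s \<and> s \<le> v}"
        using True by (auto intro: order.trans)
      moreover have "v \<notin> {s. u \<le> s \<and> s \<le> t}" using True by (auto dest: antisym)
      moreover have "v \<in> {s. u \<le> s \<and> s \<le> v}" using True by (auto intro: order.trans)
      ultimately have "{s. u \<le> s \<and> s \<le> t} \<subset> {s. u \<le> s \<and> s \<le> v}" by blast
      hence "card {s. u \<le> s \<and> s \<le> t} < card {s. u \<le> s \<and> s \<le> v}"
        by (rule psubset_card_mono[rotated]) simp
      hence "E u t = 0" by (rule less.hyps)
      thus ?thesis by simp
    next
      case False
      thus ?thesis using ER d unfolding inc_alg_def by auto
    qed
  qed
  finally show ?case .
qed

lemma nzprod:
  fixes E :: "'a::{finite,order} \<Rightarrow> 'a \<Rightarrow> 'b::field"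
  assumes ER: "E \<in> inc_alg" and idem: "E \<odot> E = E" and nz: "E \<noteq> 0"
    and ere: "\<forall>h\<in>inc_alg. \<exists>c. E \<odot> h \<odot> E = inc_scale c E"
    and BE: "B \<odot> E = B" and EA: "E \<odot> A = A" and BA: "B \<odot> A = 0"
  shows "B = 0 \<or> A = 0"
proof -
  obtain z where z: "E z z \<noteq> 0"
  proof (rule ccontr)
    assume "\<not> thesis"
    hence "\<forall>z. E z z = 0" using that by blast
    hence "E = 0" using idem_diag0[OF ER idem] by (auto intro!: ext)
    thus False using nz by simp
  qed
  have "E z z = (E \<odot> E) z z" using idem by simp
  also have "\<dots> = (\<Sum>t\<in>UNIV. E z t * E t z)" by (simp add: mm_def)
  also have "\<dots> = E z z * E z z"
  proof -
    have "(\<Sum>t\<in>UNIV. E z t * E t z) = (\<Sum>t\<in>UNIV. if t = z then E z z * E z z else 0)"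
    proof (rule sum.cong)
      fix t assume "t \<in> (UNIV::'a set)"
      show "E z t * E t z = (if t = z then E z z * E z z else 0)"
      proof (cases "t = z")
        case False
        hence "\<not> z \<le> t \<or> \<not> t \<le> z" by (auto dest: antisym)
        hence "E z t = 0 \<or> E t z = 0" using ER unfolding inc_alg_def by blast
        thus ?thesis using False by auto
      qed simp
    qed simp
    thus ?thesis by simp
  qed
  finally have z1: "E z z = 1" using z
    by (metis mult.right_neutral mult_left_cancel)
  obtain c where c: "E \<odot> eu z z \<odot> E = inc_scale c E"
    using ere R_eu[of z z] by auto
  have "(E \<odot> eu z z \<odot> E) z z = E z z * E z z"
    unfolding eu_right by (simp add: mm_def)
  hence "c = 1" using c z1 by (simp add: inc_scale_def)
  hence EzE: "E \<odot> eu z z \<odot> E = E" using c by simp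
  have "B \<odot> A = B \<odot> (E \<odot> eu z z \<odot> E) \<odot> A" by (simp only: EzE BE)
  also have "\<dots> = (B \<odot> E) \<odot> eu z z \<odot> (E \<odot> A)" by (simp only: mm_assoc)
  also have "\<dots> = B \<odot> eu z z \<odot> A" by (simp only: BE EA)
  finally have "B \<odot> eu z z \<odot> A = 0" using BA by simp
  hence ent: "\<And>u v. B u z * A z v = 0"
  proof -
    fix u v
    assume h: "B \<odot> eu z z \<odot> A = 0"
    have "(B \<odot> eu z z \<odot> A) u v = B u z * A z v" unfolding eu_right by (simp add: mm_def)
    thus "B u z * A z v = 0" using h by simp
  qed
  show ?thesis
  proof (cases "\<exists>u. B u z \<noteq> 0")
    case True
    hence "\<forall>v. A z v = 0" using ent by (metis mult_eq_0_iff)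
    hence "eu z z \<odot> A = 0" by (auto simp: eu_left intro!: ext)
    have "A = (E \<odot> eu z z \<odot> E) \<odot> A" by (simp only: EzE EA)
    also have "\<dots> = E \<odot> (eu z z \<odot> (E \<odot> A))" by (simp only: mm_assoc)
    also have "\<dots> = 0" by (simp only: EA \<open>eu z z \<odot> A = 0\<close> mm_zero_right)
    finally have "A = 0" .
    thus ?thesis by simp
  next
    case False
    hence "B \<odot> eu z z = 0" by (auto simp: eu_right intro!: ext)
    have "B = B \<odot> (E \<odot> eu z z \<odot> E)" by (simp only: EzE BE)
    also have "\<dots> = (B \<odot> E) \<odot> eu z z \<odot> E" by (simp only: mm_assoc)
    also have "\<dots> = 0" by (simp only: BE \<open>B \<odot> eu z z = 0\<close> mm_zero_left)
    finally have "B = 0" .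
    thus ?thesis by simp
  qed
qed


locale jt =
  fixes \<psi> :: "('a::{finite,order} \<Rightarrow> 'a \<Rightarrow> 'b::field) \<Rightarrow> ('a \<Rightarrow> 'a \<Rightarrow> 'b)"
  assumes bij: "bij_betw \<psi> inc_alg inc_alg"
  and add: "\<And>f g. f \<in> inc_alg \<Longrightarrow> g \<in> inc_alg \<Longrightarrow> \<psi> (f + g) = \<psi> f + \<psi> g"
  and scl: "\<And>c f. f \<in> inc_alg \<Longrightarrow> \<psi> (inc_scale c f) = inc_scale c (\<psi> f)"
  and trip: "\<And>f g. f \<in> inc_alg \<Longrightarrow> g \<in> inc_alg \<Longrightarrow> \<psi> (f \<odot> g \<odot> f) = \<psi> f \<odot> \<psi> g \<odot> \<psi> f"
  and one: "\<psi> dlt = dlt"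
begin

lemma inR: "f \<in> inc_alg \<Longrightarrow> \<psi> f \<in> inc_alg" using bij bij_betwE by blast

lemma zero: "\<psi> 0 = 0" using scl[of 0 0] R_zero by simp

lemma inj: "f \<in> inc_alg \<Longrightarrow> g \<in> inc_alg \<Longrightarrow> \<psi> f = \<psi> g \<Longrightarrow> f = g"
  using bij by (auto simp: bij_betw_def inj_on_def)

lemma nz: "f \<in> inc_alg \<Longrightarrow> f \<noteq> 0 \<Longrightarrow> \<psi> f \<noteq> 0"
  using inj[of f 0] zero R_zero by auto

lemma surj: "h \<in> inc_alg \<Longrightarrow> \<exists>g\<in>inc_alg. \<psi> g = h"
  using bij unfolding bij_betw_def by (metis imageE)

lemma sq: "f \<in> inc_alg \<Longrightarrow> \<psi> (f \<odot> f) = \<psi> f \<odot> \<psi> f"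
  using trip[of f dlt] R_dlt one by simp

lemma jord: assumes f: "f \<in> inc_alg" and g: "g \<in> inc_alg"
  shows "\<psi> (f \<odot> g + g \<odot> f) = \<psi> f \<odot> \<psi> g + \<psi> g \<odot> \<psi> f"
proof -
  have e1: "(f + g) \<odot> (f + g) = f \<odot> f + (f \<odot> g + g \<odot> f) + g \<odot> g"
    by (simp only: mm_add_left mm_add_right add_ac)
  have e2: "(\<psi> f + \<psi> g) \<odot> (\<psi> f + \<psi> g) = \<psi> f \<odot> \<psi> f + (\<psi> f \<odot> \<psi> g + \<psi> g \<odot> \<psi> f) + \<psi> g \<odot> \<psi> g"
    by (simp only: mm_add_left mm_add_right add_ac)
  have m: "f \<odot> f \<in> inc_alg" "g \<odot> g \<in> inc_alg" "f \<odot> g + g \<odot> f \<in> inc_alg"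
    using f g by (auto intro: R_mm R_add)
  have "\<psi> ((f + g) \<odot> (f + g)) = \<psi> (f + g) \<odot> \<psi> (f + g)" using f g R_add sq by blast
  hence "\<psi> (f \<odot> f + (f \<odot> g + g \<odot> f) + g \<odot> g)
      = \<psi> f \<odot> \<psi> f + (\<psi> f \<odot> \<psi> g + \<psi> g \<odot> \<psi> f) + \<psi> g \<odot> \<psi> g"
    unfolding e1 add[OF f g] e2 .
  hence "\<psi> (f \<odot> f) + \<psi> (f \<odot> g + g \<odot> f) + \<psi> (g \<odot> g)
      = \<psi> f \<odot> \<psi> f + (\<psi> f \<odot> \<psi> g + \<psi> g \<odot> \<psi> f) + \<psi> g \<odot> \<psi> g"
    unfolding add[OF R_add[OF m(1) m(3)] m(2)] add[OF m(1) m(3)] .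
  thus ?thesis unfolding sq[OF f] sq[OF g] by (metis add_left_cancel add_right_cancel)
qed

abbreviation EE :: "'a \<Rightarrow> 'a \<Rightarrow> 'a \<Rightarrow> 'b" where "EE x \<equiv> \<psi> (eu x x)"
abbreviation AA :: "'a \<Rightarrow> 'a \<Rightarrow> 'a \<Rightarrow> 'a \<Rightarrow> 'b" where "AA x y \<equiv> \<psi> (eu x y)"

lemma E_R: "EE x \<in> inc_alg" by (rule inR[OF R_eu]) simp
lemma A_R: "x \<le> y \<Longrightarrow> AA x y \<in> inc_alg" by (rule inR[OF R_eu])
lemma A_nz: "x \<le> y \<Longrightarrow> AA x y \<noteq> 0" by (rule nz[OF R_eu eu_nz])

lemma E_idem: "EE x \<odot> EE x = EE x"
  using sq[OF R_eu[of x x]] by (simp add: eu_eu)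

lemma E_idem': "EE x \<odot> (EE x \<odot> h) = EE x \<odot> h"
  by (simp only: mm_assoc[symmetric] E_idem)

lemma E_orth: assumes "x \<noteq> y" shows "EE x \<odot> EE y = 0"
proof -
  have "\<psi> (eu x x \<odot> eu y y + eu y y \<odot> eu x x) = EE x \<odot> EE y + EE y \<odot> EE x"
    by (rule jord; rule R_eu; simp)
  hence s: "EE x \<odot> EE y + EE y \<odot> EE x = 0" using assms by (simp add: eu_eu zero)
  have "\<psi> (eu x x \<odot> eu y y \<odot> eu x x) = EE x \<odot> EE y \<odot> EE x"
    by (rule trip; rule R_eu; simp)
  hence t: "EE x \<odot> (EE y \<odot> EE x) = 0" using assms by (simp add: eu_eu zero mm_assoc)
  have "EE x \<odot> EE y = EE x \<odot> (EE x \<odot> EE y)" by (simp only: E_idem')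
  also have "\<dots> = EE x \<odot> (- (EE y \<odot> EE x))"
    using s eq_neg_iff_add_eq_0 by metis
  also have "\<dots> = 0" using t by (simp only: mm_neg_right minus_zero)
  finally show ?thesis .
qed

lemma E_orth': "x \<noteq> y \<Longrightarrow> EE x \<odot> (EE y \<odot> h) = 0"
  by (simp add: mm_assoc[symmetric] E_orth)

lemmas Esimps = mm_assoc E_idem E_idem' E_orth E_orth'

lemma ERE: "h \<in> inc_alg \<Longrightarrow> \<exists>c. EE x \<odot> h \<odot> EE x = inc_scale c (EE x)"
proof -
  assume "h \<in> inc_alg"
  then obtain g where g: "g \<in> inc_alg" "\<psi> g = h" using surj by blast
  have "eu x x \<odot> g \<odot> eu x x = inc_scale (g x x) (eu x x)"
    apply (simp only: eu_right eu_left)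
    apply (rule ext)+ apply (simp add: eu_def inc_scale_def) done
  hence "EE x \<odot> h \<odot> EE x = \<psi> (inc_scale (g x x) (eu x x))"
    using trip[OF R_eu[of x x] g(1)] g(2) by simp
  thus ?thesis using scl[OF R_eu[of x x]] by auto
qed

end


context jt
begin

lemma psi_add3: "f \<in> inc_alg \<Longrightarrow> g \<in> inc_alg \<Longrightarrow> \<psi> (f + g) = \<psi> f + \<psi> g" by (rule add)

lemma peirce: assumes xy: "x < y"
  shows "AA x y = EE x \<odot> AA x y \<odot> EE y + EE y \<odot> AA x y \<odot> EE x"
proof -
  have ne: "x \<noteq> y" "y \<noteq> x" using xy by auto
  have "\<psi> (eu x x \<odot> eu x y + eu x y \<odot> eu x x) = EE x \<odot> AA x y + AA x y \<odot> EE x"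
    by (rule jord; rule R_eu; use xy in simp)
  hence h1: "EE x \<odot> AA x y + AA x y \<odot> EE x = AA x y" using ne by (simp add: eu_eu)
  have "\<psi> (eu y y \<odot> eu x y + eu x y \<odot> eu y y) = EE y \<odot> AA x y + AA x y \<odot> EE y"
    by (rule jord; rule R_eu; use xy in simp)
  hence h2: "EE y \<odot> AA x y + AA x y \<odot> EE y = AA x y" using ne by (simp add: eu_eu)
  have a: "EE x \<odot> AA x y = EE x \<odot> AA x y \<odot> EE y"
  proof -
    have "EE x \<odot> AA x y = EE x \<odot> (EE y \<odot> AA x y + AA x y \<odot> EE y)" using h2 by simp
    also have "\<dots> = EE x \<odot> AA x y \<odot> EE y"
      using ne by (simp add: mm_add_right E_orth' mm_assoc)
    finally show ?thesis .
  qed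
  have b: "AA x y \<odot> EE x = EE y \<odot> AA x y \<odot> EE x"
  proof -
    have "AA x y \<odot> EE x = (EE y \<odot> AA x y + AA x y \<odot> EE y) \<odot> EE x" using h2 by simp
    also have "\<dots> = EE y \<odot> AA x y \<odot> EE x"
      using ne by (simp add: mm_add_left E_orth mm_assoc)
    finally show ?thesis .
  qed
  show ?thesis using h1 a b by simp
qed

definition PP where "PP x y = EE x \<odot> AA x y \<odot> EE y"
definition QQ where "QQ x y = EE y \<odot> AA x y \<odot> EE x"

lemma dich: assumes xy: "x < y" shows "PP x y = 0 \<or> QQ x y = 0"
proof -
  have ne: "x \<noteq> y" "y \<noteq> x" using xy by auto
  have xle: "x \<le> y" using xy by simp
  have PR: "PP x y \<in> inc_alg" unfolding PP_def using E_R A_R[OF xle] by (intro R_mm)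
  obtain g where g: "g \<in> inc_alg" "\<psi> g = PP x y" using surj[OF PR] by blast
  have gx: "g x x = 0"
  proof -
    have "\<psi> (eu x x \<odot> g \<odot> eu x x) = EE x \<odot> PP x y \<odot> EE x"
      using trip[OF R_eu[of x x] g(1)] g(2) by simp
    also have "\<dots> = 0" unfolding PP_def using ne by (simp add: Esimps)
    finally have "eu x x \<odot> g \<odot> eu x x = 0"
      using inj[OF R_mm[OF R_mm[OF R_eu g(1)] R_eu] R_zero] zero by simp
    hence "(eu x x \<odot> g \<odot> eu x x) x x = 0" by simp
    thus ?thesis by (simp only: eu_right eu_left) simp
  qed
  have gy: "g y y = 0"
  proof -
    have "\<psi> (eu y y \<odot> g \<odot> eu y y) = EE y \<odot> PP x y \<odot> EE y"
      using trip[OF R_eu[of y y] g(1)] g(2) by simp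
    also have "\<dots> = 0" unfolding PP_def using ne by (simp add: Esimps)
    finally have "eu y y \<odot> g \<odot> eu y y = 0"
      using inj[OF R_mm[OF R_mm[OF R_eu g(1)] R_eu] R_zero] zero by simp
    hence "(eu y y \<odot> g \<odot> eu y y) y y = 0" by simp
    thus ?thesis by (simp only: eu_right eu_left) simp
  qed
  define S :: "'a \<Rightarrow> 'a \<Rightarrow> 'b" where "S = eu x x + eu y y"
  have SR: "S \<in> inc_alg" unfolding S_def by (intro R_add R_eu) simp_all
  have pS: "\<psi> S = EE x + EE y" unfolding S_def by (rule add; rule R_eu; simp)
  have "\<psi> (S \<odot> g \<odot> S) = (EE x + EE y) \<odot> PP x y \<odot> (EE x + EE y)"
    using trip[OF SR g(1)] g(2) pS by simp
  also have "\<dots> = PP x y" unfolding PP_def using ne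
    by (simp add: mm_add_left mm_add_right Esimps)
  finally have "S \<odot> g \<odot> S = g" using inj[OF R_mm[OF R_mm[OF SR g(1)] SR] g(1)] g(2) by simp
  hence ent: "\<And>a b. (S \<odot> g \<odot> S) a b = g a b" by simp
  have gform: "g = inc_scale (g x y) (eu x y)"
  proof (rule ext, rule ext)
    fix a b
    have e: "(S \<odot> g \<odot> S) a b = (if (a = x \<or> a = y) \<and> (b = x \<or> b = y) then g a b else 0)"
      unfolding S_def mm_add_left mm_add_right eu_left eu_right using ne by auto
    have gyx: "g y x = 0" using g(1) xy unfolding inc_alg_def by auto
    show "g a b = inc_scale (g x y) (eu x y) a b"
    proof -
      have h: "g a b = (if (a = x \<or> a = y) \<and> (b = x \<or> b = y) then g a b else 0)"
        using ent[of a b] e by simp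
      show ?thesis
        apply (cases "a = x"; cases "b = y")
        using h gx gy gyx ne by (auto simp: inc_scale_def eu_def split: if_splits)
    qed
  qed
  have "PP x y = inc_scale (g x y) (AA x y)"
    using g(2) gform scl[OF R_eu[OF xle]] by metis
  hence "EE y \<odot> PP x y \<odot> EE x = inc_scale (g x y) (QQ x y)"
    unfolding QQ_def by (simp add: mm_scale_left mm_scale_right)
  moreover have "EE y \<odot> PP x y \<odot> EE x = 0" unfolding PP_def using ne by (simp add: Esimps)
  ultimately have "g x y = 0 \<or> QQ x y = 0" using scale_eq0 by metis
  thus ?thesis using \<open>PP x y = inc_scale (g x y) (AA x y)\<close> by auto
qed

lemma A_PQ: "x < y \<Longrightarrow> AA x y = PP x y + QQ x y"
  unfolding PP_def QQ_def by (rule peirce)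

lemma H_abs: assumes "x < y" "QQ x y = 0"
  shows "EE x \<odot> AA x y = AA x y" "AA x y \<odot> EE y = AA x y"
proof -
  have A: "AA x y = PP x y" using A_PQ[OF assms(1)] assms(2) by simp
  have ne: "x \<noteq> y" using assms by auto
  show "EE x \<odot> AA x y = AA x y" by (subst (1 2) A, unfold PP_def, simp add: Esimps)
  show "AA x y \<odot> EE y = AA x y" by (subst (1 2) A, unfold PP_def, simp add: Esimps)
qed

lemma A_abs: assumes "x < y" "QQ x y \<noteq> 0"
  shows "EE y \<odot> AA x y = AA x y" "AA x y \<odot> EE x = AA x y"
proof -
  have "PP x y = 0" using dich[OF assms(1)] assms(2) by simp
  hence A: "AA x y = QQ x y" using A_PQ[OF assms(1)] by simp
  show "EE y \<odot> AA x y = AA x y" by (subst (1 2) A, unfold QQ_def, simp add: Esimps)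
  show "AA x y \<odot> EE x = AA x y" by (subst (1 2) A, unfold QQ_def, simp add: Esimps)
qed

end


context jt
begin

lemma zprod: "A \<odot> EE u = A \<Longrightarrow> EE v \<odot> B = B \<Longrightarrow> u \<noteq> v \<Longrightarrow> A \<odot> B = 0"
proof -
  assume a: "A \<odot> EE u = A" and b: "EE v \<odot> B = B" and uv: "u \<noteq> v"
  have "A \<odot> B = (A \<odot> EE u) \<odot> (EE v \<odot> B)" by (simp only: a b)
  also have "\<dots> = A \<odot> (EE u \<odot> (EE v \<odot> B))" by (simp only: mm_assoc)
  also have "\<dots> = 0" by (simp only: E_orth'[OF uv] mm_zero_right)
  finally show ?thesis .
qed

lemma jeu: "x \<le> y \<Longrightarrow> z \<le> w \<Longrightarrow>
   \<psi> (eu x y \<odot> eu z w + eu z w \<odot> eu x y) = AA x y \<odot> AA z w + AA z w \<odot> AA x y"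
  by (rule jord[OF R_eu R_eu])

lemma ERE': "\<forall>h\<in>inc_alg. \<exists>c. EE v \<odot> h \<odot> EE v = inc_scale c (EE v)"
  using ERE by blast

lemma core:
  assumes xy: "x < y" and zw: "z < w" and ne: "(x, y) \<noteq> (z, w)"
    and sh: "x = z \<or> y = w \<or> y = z \<or> w = x"
    and H: "QQ x y = 0" and Q: "QQ z w \<noteq> 0"
  shows False
proof -
  note a = H_abs[OF xy H] and b = A_abs[OF zw Q]
  have n1: "x \<noteq> y" "y \<noteq> x" "z \<noteq> w" "w \<noteq> z" using xy zw by auto
  have Anz: "AA x y \<noteq> 0" "AA z w \<noteq> 0" using A_nz xy zw by auto
  have Enz: "\<And>v. EE v \<noteq> 0" using A_nz by simp
  consider "x = z" | "y = w" | "y = z" | "w = x" using sh by blast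
  thus False
  proof cases
    case 1
    hence yw: "y \<noteq> w" using ne by auto
    have "\<psi> (eu x y \<odot> eu z w + eu z w \<odot> eu x y) = 0"
      using 1 n1 by (simp add: eu_eu zero)
    hence s: "AA x y \<odot> AA z w + AA z w \<odot> AA x y = 0" using jeu xy zw by simp
    have "AA x y \<odot> AA z w = 0" by (rule zprod[OF a(2) b(1) yw])
    hence "AA z w \<odot> AA x y = 0" using s by simp
    hence "AA z w = 0 \<or> AA x y = 0"
      using nzprod[OF E_R E_idem Enz ERE', of "AA z w" x "AA x y"] b(2) a(1) 1 by simp
    thus False using Anz by simp
  next
    case 2
    hence xz: "z \<noteq> x" using ne by auto
    have "\<psi> (eu x y \<odot> eu z w + eu z w \<odot> eu x y) = 0"
      using 2 n1 ne by (auto simp add: eu_eu zero)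
    hence s: "AA x y \<odot> AA z w + AA z w \<odot> AA x y = 0" using jeu xy zw by simp
    have "AA z w \<odot> AA x y = 0" by (rule zprod[OF b(2) a(1) xz])
    hence "AA x y \<odot> AA z w = 0" using s by simp
    hence "AA x y = 0 \<or> AA z w = 0"
      using nzprod[OF E_R E_idem Enz ERE', of "AA x y" y "AA z w"] b(1) a(2) 2 by simp
    thus False using Anz by simp
  next
    case 3
    have xw: "x \<noteq> w" using xy zw 3 by auto
    have "\<psi> (eu x y \<odot> eu z w + eu z w \<odot> eu x y) = AA x w"
      using 3 xw n1 by (simp add: eu_eu)
    hence s: "AA x y \<odot> AA z w + AA z w \<odot> AA x y = AA x w" using jeu xy zw by simp
    have "AA x y \<odot> AA z w = 0" by (rule zprod[OF a(2) b(1)]) (use zw 3 in auto)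
    moreover have "AA z w \<odot> AA x y = 0" by (rule zprod[OF b(2) a(1)]) (use xy 3 in auto)
    ultimately have "AA x w = 0" using s by simp
    thus False using A_nz[of x w] xy zw 3 by simp
  next
    case 4
    have zy: "z \<noteq> y" using xy zw 4 by auto
    have "\<psi> (eu x y \<odot> eu z w + eu z w \<odot> eu x y) = AA z y"
      using 4 zy n1 by (simp add: eu_eu)
    hence s: "AA x y \<odot> AA z w + AA z w \<odot> AA x y = AA z y" using jeu xy zw by simp
    have "AA x y \<odot> AA z w = 0" by (rule zprod[OF a(2) b(1)]) (use xy 4 in auto)
    moreover have "AA z w \<odot> AA x y = 0" by (rule zprod[OF b(2) a(1)]) (use zw 4 in auto)
    ultimately have "AA z y = 0" using s by simp
    thus False using A_nz[of z y] xy zw 4 by simp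
  qed
qed

lemma sameT:
  assumes xy: "x < y" and zw: "z < w" and sh: "x = z \<or> y = w \<or> y = z \<or> w = x"
  shows "QQ x y = 0 \<longleftrightarrow> QQ z w = 0"
proof (cases "(x, y) = (z, w)")
  case True thus ?thesis by simp
next
  case False
  have sh': "z = x \<or> w = y \<or> w = x \<or> y = z" using sh by auto
  show ?thesis using core[OF xy zw False sh] core[OF zw xy _ sh'] False by auto
qed

lemma global:
  assumes conn: "\<forall>a b::'a. (\<lambda>a b. a \<le> b \<or> b \<le> a)\<^sup>*\<^sup>* a b"
  shows "(\<forall>x y. x < y \<longrightarrow> QQ x y = 0) \<or> (\<forall>x y. x < y \<longrightarrow> QQ x y \<noteq> 0)"
proof (cases "\<exists>x y::'a. x < y")
  case False thus ?thesis by auto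
next
  case True
  then obtain x0 y0 :: 'a where e0: "x0 < y0" by blast
  define T where "T = (QQ x0 y0 = 0)"
  have claim: "(\<forall>w. z < w \<longrightarrow> (QQ z w = 0 \<longleftrightarrow> T)) \<and> (\<forall>w. w < z \<longrightarrow> (QQ w z = 0 \<longleftrightarrow> T))"
    if "(\<lambda>a b. a \<le> b \<or> b \<le> a)\<^sup>*\<^sup>* x0 z" for z
    using that
  proof (induction rule: rtranclp_induct)
    case base
    show ?case unfolding T_def using sameT e0 by blast
  next
    case (step z z')
    show ?case
    proof (cases "z = z'")
      case True thus ?thesis using step.IH by simp
    next
      case False
      hence "z < z' \<or> z' < z" using step.hyps(2) by auto
      thus ?thesis
      proof
        assume zz: "z < z'"
        have t: "QQ z z' = 0 \<longleftrightarrow> T" using step.IH zz by blast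
        show ?thesis using sameT[OF _ zz] t by blast
      next
        assume zz: "z' < z"
        have t: "QQ z' z = 0 \<longleftrightarrow> T" using step.IH zz by blast
        show ?thesis using sameT[OF _ zz] t by blast
      qed
    qed
  qed
  have "\<forall>x y. x < y \<longrightarrow> (QQ x y = 0 \<longleftrightarrow> T)" using claim conn by blast
  thus ?thesis by auto
qed

end


definition Pr :: "('a::order \<times> 'a) set" where "Pr = {p. fst p \<le> snd p}"

abbreviation ep :: "'a \<times> 'a \<Rightarrow> 'a \<Rightarrow> 'a \<Rightarrow> 'b::field" where
  "ep p \<equiv> eu (fst p) (snd p)"

lemma R_sum: "(\<forall>i\<in>I. F i \<in> inc_alg) \<Longrightarrow> sum F I \<in> inc_alg"
  unfolding inc_alg_def by (simp add: sum_fun_app)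

lemma scale_sum: "inc_scale c (sum F I) = (\<Sum>i\<in>I. inc_scale c (F i))"
  unfolding inc_scale_def by (rule ext)+ (simp add: sum_fun_app sum_distrib_left)

lemma expand:
  fixes f :: "'a::{finite,order} \<Rightarrow> 'a \<Rightarrow> 'b::field"
  assumes f: "f \<in> inc_alg"
  shows "f = (\<Sum>p\<in>Pr. inc_scale (f (fst p) (snd p)) (ep p))"
proof (rule ext, rule ext)
  fix a b
  have "(\<Sum>p\<in>Pr. inc_scale (f (fst p) (snd p)) (ep p)) a b
      = (\<Sum>p\<in>Pr. if p = (a, b) then f a b else 0)"
    unfolding sum_fun_app inc_scale_def eu_def
    by (rule sum.cong) auto
  also have "\<dots> = (if (a, b) \<in> Pr then f a b else 0)"
    by (simp add: sum.delta')
  also have "\<dots> = f a b" using f unfolding Pr_def inc_alg_def by auto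
  finally show "f a b = (\<Sum>p\<in>Pr. inc_scale (f (fst p) (snd p)) (ep p)) a b" by simp
qed

lemma bilin:
  "(\<Sum>p\<in>I. inc_scale (c p) (F p)) \<odot> (\<Sum>q\<in>J. inc_scale (d q) (G q))
   = (\<Sum>p\<in>I. \<Sum>q\<in>J. inc_scale (c p * d q) (F p \<odot> G q))"
  apply (simp only: mm_sum_left)
  apply (simp only: mm_scale_left mm_sum_right scale_sum mm_scale_right scale_scale)
  apply (intro sum.cong refl)
  apply (simp only: mult.commute)
  done

context jt
begin

lemma psi_sum: "finite I \<Longrightarrow> (\<forall>i\<in>I. F i \<in> inc_alg) \<Longrightarrow> \<psi> (sum F I) = (\<Sum>i\<in>I. \<psi> (F i))"
proof (induct I rule: finite_induct)
  case empty thus ?case by (simp only: sum.empty zero)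
next
  case (insert x I)
  have "\<psi> (sum F (insert x I)) = \<psi> (F x + sum F I)" by (simp only: sum.insert[OF insert(1,2)])
  also have "\<dots> = \<psi> (F x) + \<psi> (sum F I)"
    using insert(4) R_sum[of I F] by (intro add) auto
  also have "\<dots> = (\<Sum>i\<in>insert x I. \<psi> (F i))"
    using insert by (simp only: sum.insert[OF insert(1,2)]) simp
  finally show ?case .
qed

lemma psi_expand: assumes f: "f \<in> inc_alg"
  shows "\<psi> f = (\<Sum>p\<in>Pr. inc_scale (f (fst p) (snd p)) (\<psi> (ep p)))"
proof -
  have "\<psi> f = \<psi> (\<Sum>p\<in>Pr. inc_scale (f (fst p) (snd p)) (ep p))" using expand[OF f] by simp
  also have "\<dots> = (\<Sum>p\<in>Pr. \<psi> (inc_scale (f (fst p) (snd p)) (ep p)))"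
    by (rule psi_sum) (auto simp: Pr_def intro!: R_scale R_eu)
  also have "\<dots> = (\<Sum>p\<in>Pr. inc_scale (f (fst p) (snd p)) (\<psi> (ep p)))"
    by (rule sum.cong) (auto simp: Pr_def intro!: scl R_eu)
  finally show ?thesis .
qed

lemma hom_ext:
  assumes basis: "\<And>p q. p \<in> Pr \<Longrightarrow> q \<in> Pr \<Longrightarrow> \<psi> (ep p \<odot> ep q) = \<psi> (ep p) \<odot> \<psi> (ep q)"
    and f: "f \<in> inc_alg" and g: "g \<in> inc_alg"
  shows "\<psi> (f \<odot> g) = \<psi> f \<odot> \<psi> g"
proof -
  have epR: "\<And>p. p \<in> Pr \<Longrightarrow> ep p \<in> inc_alg" by (auto simp: Pr_def intro!: R_eu)
  have "f \<odot> g = (\<Sum>p\<in>Pr. \<Sum>q\<in>Pr. inc_scale (f (fst p) (snd p) * g (fst q) (snd q)) (ep p \<odot> ep q))"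
    by (subst expand[OF f], subst expand[OF g], rule bilin)
  hence "\<psi> (f \<odot> g) = (\<Sum>p\<in>Pr. \<psi> (\<Sum>q\<in>Pr. inc_scale (f (fst p) (snd p) * g (fst q) (snd q)) (ep p \<odot> ep q)))"
    by (simp only:) (rule psi_sum, simp, intro ballI R_sum R_scale R_mm epR)
  also have "\<dots> = (\<Sum>p\<in>Pr. \<Sum>q\<in>Pr. inc_scale (f (fst p) (snd p) * g (fst q) (snd q)) (\<psi> (ep p) \<odot> \<psi> (ep q)))"
  proof (rule sum.cong[OF refl])
    fix p :: "'a \<times> 'a" assume p: "p \<in> Pr"
    have "\<psi> (\<Sum>q\<in>Pr. inc_scale (f (fst p) (snd p) * g (fst q) (snd q)) (ep p \<odot> ep q))
       = (\<Sum>q\<in>Pr. \<psi> (inc_scale (f (fst p) (snd p) * g (fst q) (snd q)) (ep p \<odot> ep q)))"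
      by (rule psi_sum, simp, intro ballI R_scale R_mm epR p)
    also have "\<dots> = (\<Sum>q\<in>Pr. inc_scale (f (fst p) (snd p) * g (fst q) (snd q)) (\<psi> (ep p) \<odot> \<psi> (ep q)))"
      by (rule sum.cong[OF refl]) (simp add: scl R_mm epR p basis)
    finally show "\<psi> (\<Sum>q\<in>Pr. inc_scale (f (fst p) (snd p) * g (fst q) (snd q)) (ep p \<odot> ep q))
       = (\<Sum>q\<in>Pr. inc_scale (f (fst p) (snd p) * g (fst q) (snd q)) (\<psi> (ep p) \<odot> \<psi> (ep q)))" .
  qed
  also have "\<dots> = \<psi> f \<odot> \<psi> g"
    by (subst psi_expand[OF f], subst psi_expand[OF g], rule bilin[symmetric])
  finally show ?thesis .
qed

lemma anti_ext:
  assumes basis: "\<And>p q. p \<in> Pr \<Longrightarrow> q \<in> Pr \<Longrightarrow> \<psi> (ep p \<odot> ep q) = \<psi> (ep q) \<odot> \<psi> (ep p)"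
    and f: "f \<in> inc_alg" and g: "g \<in> inc_alg"
  shows "\<psi> (f \<odot> g) = \<psi> g \<odot> \<psi> f"
proof -
  have epR: "\<And>p. p \<in> Pr \<Longrightarrow> ep p \<in> inc_alg" by (auto simp: Pr_def intro!: R_eu)
  have "f \<odot> g = (\<Sum>p\<in>Pr. \<Sum>q\<in>Pr. inc_scale (f (fst p) (snd p) * g (fst q) (snd q)) (ep p \<odot> ep q))"
    by (subst expand[OF f], subst expand[OF g], rule bilin)
  hence "\<psi> (f \<odot> g) = (\<Sum>p\<in>Pr. \<psi> (\<Sum>q\<in>Pr. inc_scale (f (fst p) (snd p) * g (fst q) (snd q)) (ep p \<odot> ep q)))"
    by (simp only:) (rule psi_sum, simp, intro ballI R_sum R_scale R_mm epR)
  also have "\<dots> = (\<Sum>p\<in>Pr. \<Sum>q\<in>Pr. inc_scale (g (fst q) (snd q) * f (fst p) (snd p)) (\<psi> (ep q) \<odot> \<psi> (ep p)))"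
  proof (rule sum.cong[OF refl])
    fix p :: "'a \<times> 'a" assume p: "p \<in> Pr"
    have "\<psi> (\<Sum>q\<in>Pr. inc_scale (f (fst p) (snd p) * g (fst q) (snd q)) (ep p \<odot> ep q))
       = (\<Sum>q\<in>Pr. \<psi> (inc_scale (f (fst p) (snd p) * g (fst q) (snd q)) (ep p \<odot> ep q)))"
      by (rule psi_sum, simp, intro ballI R_scale R_mm epR p)
    also have "\<dots> = (\<Sum>q\<in>Pr. inc_scale (g (fst q) (snd q) * f (fst p) (snd p)) (\<psi> (ep q) \<odot> \<psi> (ep p)))"
      by (rule sum.cong[OF refl]) (simp add: scl R_mm epR p basis mult.commute)
    finally show "\<psi> (\<Sum>q\<in>Pr. inc_scale (f (fst p) (snd p) * g (fst q) (snd q)) (ep p \<odot> ep q))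
       = (\<Sum>q\<in>Pr. inc_scale (g (fst q) (snd q) * f (fst p) (snd p)) (\<psi> (ep q) \<odot> \<psi> (ep p)))" .
  qed
  also have "\<dots> = (\<Sum>q\<in>Pr. \<Sum>p\<in>Pr. inc_scale (g (fst q) (snd q) * f (fst p) (snd p)) (\<psi> (ep q) \<odot> \<psi> (ep p)))"
    by (rule sum.swap)
  also have "\<dots> = \<psi> g \<odot> \<psi> f"
    by (subst psi_expand[OF f], subst psi_expand[OF g], rule bilin[symmetric])
  finally show ?thesis .
qed

end


context jt
begin

lemma homb:
  assumes all: "\<forall>x y. x < y \<longrightarrow> QQ x y = 0" and xy: "x \<le> y" and zw: "z \<le> w"
  shows "\<psi> (eu x y \<odot> eu z w) = AA x y \<odot> AA z w"
proof -
  have ab: "EE a \<odot> AA a b = AA a b \<and> AA a b \<odot> EE b = AA a b" if "a \<le> b" for a b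
  proof (cases "a = b")
    case True thus ?thesis by (simp add: E_idem)
  next
    case False
    hence "a < b" using that by simp
    thus ?thesis using H_abs all by blast
  qed
  show ?thesis
  proof (cases "y = z")
    case False
    have "AA x y \<odot> AA z w = 0"
      by (rule zprod[OF conjunct2[OF ab[OF xy]] conjunct1[OF ab[OF zw]] False])
    thus ?thesis using False by (simp add: eu_eu zero)
  next
    case True
    note yz = True
    show ?thesis
    proof (cases "x = y")
      case True thus ?thesis using yz ab[OF zw] by (simp add: eu_eu)
    next
      case False
      note xny = False
      show ?thesis
      proof (cases "y = w")
        case True thus ?thesis using yz ab[OF xy] by (simp add: eu_eu)
      next
        case False
        have xw: "x \<noteq> w" using xy zw yz xny False by auto
        have "\<psi> (eu x y \<odot> eu z w + eu z w \<odot> eu x y) = AA x y \<odot> AA z w + AA z w \<odot> AA x y"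
          by (rule jeu[OF xy zw])
        moreover have "AA z w \<odot> AA x y = 0"
          by (rule zprod[OF conjunct2[OF ab[OF zw]] conjunct1[OF ab[OF xy]]]) (use xw in auto)
        ultimately show ?thesis using yz xw by (simp add: eu_eu)
      qed
    qed
  qed
qed

lemma antib:
  assumes all: "\<forall>x y. x < y \<longrightarrow> QQ x y \<noteq> 0" and xy: "x \<le> y" and zw: "z \<le> w"
  shows "\<psi> (eu x y \<odot> eu z w) = AA z w \<odot> AA x y"
proof -
  have ab: "EE b \<odot> AA a b = AA a b \<and> AA a b \<odot> EE a = AA a b" if "a \<le> b" for a b
  proof (cases "a = b")
    case True thus ?thesis by (simp add: E_idem)
  next
    case False
    hence "a < b" using that by simp
    thus ?thesis using A_abs all by blast
  qed
  show ?thesis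
  proof (cases "y = z")
    case False
    have "AA z w \<odot> AA x y = 0"
      by (rule zprod[OF conjunct2[OF ab[OF zw]] conjunct1[OF ab[OF xy]]]) (use False in auto)
    thus ?thesis using False by (simp add: eu_eu zero)
  next
    case True
    note yz = True
    show ?thesis
    proof (cases "x = y")
      case True thus ?thesis using yz ab[OF zw] by (simp add: eu_eu)
    next
      case False
      note xny = False
      show ?thesis
      proof (cases "y = w")
        case True thus ?thesis using yz ab[OF xy] by (simp add: eu_eu)
      next
        case False
        have xw: "x \<noteq> w" using xy zw yz xny False by auto
        have "\<psi> (eu x y \<odot> eu z w + eu z w \<odot> eu x y) = AA x y \<odot> AA z w + AA z w \<odot> AA x y"
          by (rule jeu[OF xy zw])
        moreover have "AA x y \<odot> AA z w = 0"
          by (rule zprod[OF conjunct2[OF ab[OF xy]] conjunct1[OF ab[OF zw]]]) (use xw in auto)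
        ultimately show ?thesis using yz xw by (simp add: eu_eu)
      qed
    qed
  qed
qed

lemma result:
  assumes conn: "\<forall>a b::'a. (\<lambda>a b. a \<le> b \<or> b \<le> a)\<^sup>*\<^sup>* a b"
  shows "(\<forall>f\<in>inc_alg. \<forall>g\<in>inc_alg. \<psi> (f \<odot> g) = \<psi> f \<odot> \<psi> g)
       \<or> (\<forall>f\<in>inc_alg. \<forall>g\<in>inc_alg. \<psi> (f \<odot> g) = \<psi> g \<odot> \<psi> f)"
  using global[OF conn]
proof
  assume all: "\<forall>x y. x < y \<longrightarrow> QQ x y = 0"
  have "\<psi> (ep p \<odot> ep q) = \<psi> (ep p) \<odot> \<psi> (ep q)" if "p \<in> Pr" "q \<in> Pr" for p q
    using homb[OF all] that by (auto simp: Pr_def)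
  thus ?thesis using hom_ext by blast
next
  assume all: "\<forall>x y. x < y \<longrightarrow> QQ x y \<noteq> 0"
  have "\<psi> (ep p \<odot> ep q) = \<psi> (ep q) \<odot> \<psi> (ep p)" if "p \<in> Pr" "q \<in> Pr" for p q
    using antib[OF all] that by (auto simp: Pr_def)
  thus ?thesis using anti_ext by blast
qed

end


theorem proposition6p5:
  fixes \<phi> :: "('a::{finite,order} \<Rightarrow> 'a \<Rightarrow> 'b::field) \<Rightarrow> ('a \<Rightarrow> 'a \<Rightarrow> 'b)"
  assumes conn: "poset_connected TYPE('a)"
    and char2: "(2::'b) \<noteq> 0" and char3: "(3::'b) \<noteq> 0"
    and bij: "bij_betw \<phi> inc_alg inc_alg"
    and lin: "inc_linear \<phi>"
    and jordan: "\<forall>f\<in>inc_alg. \<forall>g\<in>inc_alg.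
                   \<phi> (inc_mult (inc_mult f g) f) = inc_mult (inc_mult (\<phi> f) (\<phi> g)) (\<phi> f)"
  shows "\<exists>r::'b. (r = -1 \<or> r = 1) \<and>
           (\<exists>\<psi>. (inc_automorphism \<psi> \<or> inc_anti_automorphism \<psi>) \<and>
                 (\<forall>f\<in>inc_alg. \<phi> f = inc_scale r (\<psi> f)))"
proof -
  have conn': "\<forall>a b::'a. (\<lambda>a b. a \<le> b \<or> b \<le> a)\<^sup>*\<^sup>* a b"
    using conn unfolding poset_connected_def .
  have phiR: "\<And>f. f \<in> inc_alg \<Longrightarrow> \<phi> f \<in> inc_alg" using bij bij_betwE by blast
  have surj: "\<And>h. h \<in> inc_alg \<Longrightarrow> \<exists>g\<in>inc_alg. \<phi> g = h"
    using bij unfolding bij_betw_def by (metis imageE)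
  have ladd: "\<And>f g. f \<in> inc_alg \<Longrightarrow> g \<in> inc_alg \<Longrightarrow> \<phi> (f + g) = \<phi> f + \<phi> g"
    using lin unfolding inc_linear_def inc_add_eq by blast
  have lscl: "\<And>c f. f \<in> inc_alg \<Longrightarrow> \<phi> (inc_scale c f) = inc_scale c (\<phi> f)"
    using lin unfolding inc_linear_def by blast
  have jor: "\<And>f g. f \<in> inc_alg \<Longrightarrow> g \<in> inc_alg \<Longrightarrow> \<phi> (f \<odot> g \<odot> f) = \<phi> f \<odot> \<phi> g \<odot> \<phi> f"
  proof -
    fix f g :: "'a \<Rightarrow> 'a \<Rightarrow> 'b" assume f: "f \<in> inc_alg" and g: "g \<in> inc_alg"
    have "\<phi> (inc_mult (inc_mult f g) f) = inc_mult (inc_mult (\<phi> f) (\<phi> g)) (\<phi> f)"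
      using jordan f g by blast
    thus "\<phi> (f \<odot> g \<odot> f) = \<phi> f \<odot> \<phi> g \<odot> \<phi> f"
      using f g phiR[OF f] phiR[OF g]
      by (simp add: mult_eq R_mm)
  qed
  define u where "u = \<phi> dlt"
  have uR: "u \<in> inc_alg" unfolding u_def by (rule phiR[OF R_dlt])
  have hu: "\<And>h. h \<in> inc_alg \<Longrightarrow> h = u \<odot> h \<odot> u"
  proof -
    fix h :: "'a \<Rightarrow> 'a \<Rightarrow> 'b" assume "h \<in> inc_alg"
    then obtain g where g: "g \<in> inc_alg" "\<phi> g = h" using surj by blast
    show "h = u \<odot> h \<odot> u" using jor[OF R_dlt g(1)] g(2) unfolding u_def by simp
  qed
  have uu: "u \<odot> u = dlt" using hu[OF R_dlt] by simp
  have comm: "\<And>h. h \<in> inc_alg \<Longrightarrow> u \<odot> h = h \<odot> u"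
  proof -
    fix h :: "'a \<Rightarrow> 'a \<Rightarrow> 'b" assume h: "h \<in> inc_alg"
    have "u \<odot> h = u \<odot> (u \<odot> h \<odot> u)" using hu[OF h] by simp
    also have "\<dots> = (u \<odot> u) \<odot> h \<odot> u" by (simp only: mm_assoc)
    also have "\<dots> = h \<odot> u" by (simp only: uu dlt_left)
    finally show "u \<odot> h = h \<odot> u" .
  qed
  have offd: "\<And>a b. a \<noteq> b \<Longrightarrow> u a b = 0"
  proof -
    fix a b :: 'a assume ab: "a \<noteq> b"
    have "(u \<odot> eu b b) a b = (eu b b \<odot> u) a b" using comm[OF R_eu[of b b]] by simp
    thus "u a b = 0" using ab by (simp add: eu_left eu_right)
  qed
  have deq: "\<And>x y. x \<le> y \<Longrightarrow> u x x = u y y"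
  proof -
    fix x y :: 'a assume xy: "x \<le> y"
    have "(u \<odot> eu x y) x y = (eu x y \<odot> u) x y" using comm[OF R_eu[OF xy]] by simp
    thus "u x x = u y y" by (simp add: eu_left eu_right)
  qed
  define x0 :: 'a where "x0 = undefined"
  define c where "c = u x0 x0"
  have allc: "u z z = c" for z
  proof -
    have "(\<lambda>a b. a \<le> b \<or> b \<le> a)\<^sup>*\<^sup>* x0 z" using conn' by blast
    thus ?thesis
    proof (induction rule: rtranclp_induct)
      case base thus ?case unfolding c_def ..
    next
      case (step y z)
      thus ?case using deq by metis
    qed
  qed
  have uform: "u = inc_scale c dlt"
    by (rule ext, rule ext) (auto simp: inc_scale_def dlt_def allc offd)
  have "inc_scale (c * c) dlt = (dlt :: 'a \<Rightarrow> 'a \<Rightarrow> 'b)"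
    using uu unfolding uform by (simp add: mm_scale_left mm_scale_right scale_scale)
  hence "(c * c) * dlt x0 x0 = (dlt x0 x0 :: 'b)" unfolding inc_scale_def by metis
  hence cc: "c * c = 1" by (simp add: dlt_def)
  hence cpm: "c = -1 \<or> c = 1" using square_eq_1_iff by auto
  have cnz: "c \<noteq> 0" using cc by auto
  define \<psi> where "\<psi> = (\<lambda>f. inc_scale c (\<phi> f))"
  have scinv: "\<And>f. inc_scale c (inc_scale c f) = f" by (simp add: scale_scale cc)
  have bsc: "bij_betw (inc_scale c) inc_alg (inc_alg :: ('a \<Rightarrow> 'a \<Rightarrow> 'b) set)"
    by (rule bij_betw_byWitness[where f' = "inc_scale c"]) (auto simp: scinv R_scale)
  have psibij: "bij_betw \<psi> inc_alg inc_alg"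
    unfolding \<psi>_def using bij_betw_trans[OF bij bsc] by (simp add: comp_def)
  have jtpsi: "jt \<psi>"
  proof
    show "bij_betw \<psi> inc_alg inc_alg" by (rule psibij)
  next
    fix f g :: "'a \<Rightarrow> 'a \<Rightarrow> 'b" assume "f \<in> inc_alg" "g \<in> inc_alg"
    thus "\<psi> (f + g) = \<psi> f + \<psi> g" unfolding \<psi>_def by (simp add: ladd scale_add)
  next
    fix d and f :: "'a \<Rightarrow> 'a \<Rightarrow> 'b" assume "f \<in> inc_alg"
    thus "\<psi> (inc_scale d f) = inc_scale d (\<psi> f)" unfolding \<psi>_def
      by (simp add: lscl scale_scale mult.commute)
  next
    fix f g :: "'a \<Rightarrow> 'a \<Rightarrow> 'b" assume "f \<in> inc_alg" "g \<in> inc_alg"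
    hence "\<psi> (f \<odot> g \<odot> f) = inc_scale c (\<phi> f \<odot> \<phi> g \<odot> \<phi> f)" unfolding \<psi>_def by (simp add: jor)
    also have "\<dots> = inc_scale (c * c * c) (\<phi> f \<odot> \<phi> g \<odot> \<phi> f)" using cc by simp
    also have "\<dots> = \<psi> f \<odot> \<psi> g \<odot> \<psi> f" unfolding \<psi>_def
      by (simp only: mm_scale_left mm_scale_right scale_scale mult.assoc)
    finally show "\<psi> (f \<odot> g \<odot> f) = \<psi> f \<odot> \<psi> g \<odot> \<psi> f" .
  next
    show "\<psi> dlt = dlt" unfolding \<psi>_def u_def[symmetric] uform by (rule scinv)
  qed
  have psiR: "\<And>f. f \<in> inc_alg \<Longrightarrow> \<psi> f \<in> inc_alg" using psibij bij_betwE by blast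
  have plin: "inc_linear \<psi>"
    unfolding inc_linear_def inc_add_eq using jt.add[OF jtpsi] jt.scl[OF jtpsi] by blast
  have bk: "\<forall>f\<in>inc_alg. \<phi> f = inc_scale c (\<psi> f)" unfolding \<psi>_def by (simp add: scinv)
  from jt.result[OF jtpsi conn']
  have "inc_automorphism \<psi> \<or> inc_anti_automorphism \<psi>"
  proof
    assume h: "\<forall>f\<in>inc_alg. \<forall>g\<in>inc_alg. \<psi> (f \<odot> g) = \<psi> f \<odot> \<psi> g"
    have "\<forall>f\<in>inc_alg. \<forall>g\<in>inc_alg. \<psi> (inc_mult f g) = inc_mult (\<psi> f) (\<psi> g)"
      using h psiR by (simp add: mult_eq)
    thus ?thesis unfolding inc_automorphism_def using psibij plin by blast
  next
    assume h: "\<forall>f\<in>inc_alg. \<forall>g\<in>inc_alg. \<psi> (f \<odot> g) = \<psi> g \<odot> \<psi> f"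
    have "\<forall>f\<in>inc_alg. \<forall>g\<in>inc_alg. \<psi> (inc_mult f g) = inc_mult (\<psi> g) (\<psi> f)"
      using h psiR by (simp add: mult_eq)
    thus ?thesis unfolding inc_anti_automorphism_def using psibij plin by blast
  qed
  thus ?thesis using cpm bk by blast
qed

end
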